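(* Let $(g_n)_{n\ge 0}$ be a sequence of positive real numbers (not depending on $a$) and, for $a>0$, let \[ g(a,x)=\sum_{n=0}^{\infty} g_n\Gamma(a+n)x^n \] (a formal power series in $x$), where $\Gamma$ is Euler's gamma function. Let $b>a>0$ and $\delta>0$, and write \[ \psi_{a,b,\delta}(x)=g(a+\delta,x)g(b,x)-g(b+\delta,x)g(a,x)=\sum_{m=0}^{\infty}\psi_m x^m . \] Then $\psi_m<0$ for all $m\ge0$, so that $a\mapsto g(a,x)$ is strictly log-convex for $x>0$.
   Context: Power series are understood formally; the log-convexity statement refers to values $x>0$ at which the series converge. *)

theory Defs
  imports "HOL-Analysis.Analysis" "HOL-Computational_Algebra.Formal_Power_Series"
begin

definition gfps :: "(nat \<Rightarrow> real) \<Rightarrow> real \<Rightarrow> real fps" where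
  "gfps g a = Abs_fps (\<lambda>n. g n * Gamma (a + real n))"

definition strict_convex_on :: "real set \<Rightarrow> (real \<Rightarrow> real) \<Rightarrow> bool" where
  "strict_convex_on S f \<longleftrightarrow>
     (\<forall>x\<in>S. \<forall>y\<in>S. \<forall>t::real. x \<noteq> y \<and> 0 < t \<and> t < 1 \<longrightarrow>
        f (t * x + (1 - t) * y) < t * f x + (1 - t) * f y)"

end

theory Submission
  imports Defs
begin

lemma lnGamma_deriv:
  fixes x :: real assumes "x > 0"
  shows "((\<lambda>x. ln (Gamma x)) has_real_derivative Digamma x) (at x)"
proof -
  have "((\<lambda>x. ln (Gamma x)) has_real_derivative (1 / Gamma x) * (Gamma x * Digamma x)) (at x)"
    using assms by (auto intro!: derivative_eq_intros Gamma_real_pos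
           simp: Gamma_eq_zero_iff elim!: nonpos_Ints_cases')
  moreover have "Gamma x > 0" using assms by (rule Gamma_real_pos)
  ultimately show ?thesis by simp
qed

lemma lnGamma_strict:
  fixes x y t :: real
  assumes xy: "0 < x" "x < y" and t: "0 < t" "t < 1"
  shows "ln (Gamma ((1 - t) * x + t * y)) < (1 - t) * ln (Gamma x) + t * ln (Gamma y)"
proof -
  define f where "f = (\<lambda>x::real. ln (Gamma x))"
  define z where "z = (1 - t) * x + t * y"
  from xy t have xz: "z > x" by (simp add: z_def algebra_simps)
  have "y - z = (1 - t) * (y - x)" by (simp add: z_def algebra_simps)
  also from xy t have "\<dots> > 0" by (intro mult_pos_pos) simp_all
  finally have yz: "z < y" by simp
  have der: "\<And>u. u > 0 \<Longrightarrow> (f has_real_derivative Digamma u) (at u)"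
    unfolding f_def by (rule lnGamma_deriv)
  from xz yz xy have "\<exists>\<xi>. \<xi> > x \<and> \<xi> < z \<and> f z - f x = (z - x) * Digamma \<xi>"
    by (intro MVT2) (auto intro!: der)
  then obtain \<xi> where \<xi>: "\<xi> > x" "\<xi> < z" "f z - f x = (z - x) * Digamma \<xi>" by auto
  from xz yz xy have "\<exists>\<eta>. \<eta> > z \<and> \<eta> < y \<and> f y - f z = (y - z) * Digamma \<eta>"
    by (intro MVT2) (auto intro!: der)
  then obtain \<eta> where \<eta>: "\<eta> > z" "\<eta> < y" "f y - f z = (y - z) * Digamma \<eta>" by auto
  have "Digamma \<xi> < Digamma \<eta>"
    using \<xi> \<eta> xy by (intro Digamma_real_strict_mono) auto
  have e1: "z - x = t * (y - x)" by (simp add: z_def algebra_simps)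
  have e2: "y - z = (1 - t) * (y - x)" by (simp add: z_def algebra_simps)
  have "(f z - f x) * (1 - t) < (f y - f z) * t"
  proof -
    have "(f z - f x) * (1 - t) = t * (1 - t) * (y - x) * Digamma \<xi>"
      using \<xi>(3) e1 by simp
    also have "\<dots> < t * (1 - t) * (y - x) * Digamma \<eta>"
      using \<open>Digamma \<xi> < Digamma \<eta>\<close> t xy by (intro mult_strict_left_mono) auto
    also have "\<dots> = (f y - f z) * t" using \<eta>(3) e2 by simp
    finally show ?thesis .
  qed
  then have "f z < (1 - t) * f x + t * f y" by (simp add: algebra_simps)
  then show ?thesis by (simp add: f_def z_def)
qed

lemma lnGamma_strict':
  fixes x y t :: real
  assumes "0 < x" "0 < y" "x \<noteq> y" and t: "0 < t" "t < 1"
  shows "ln (Gamma (t * x + (1 - t) * y)) < t * ln (Gamma x) + (1 - t) * ln (Gamma y)"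
proof (cases "x < y")
  case True
  have "ln (Gamma ((1 - (1 - t)) * x + (1 - t) * y)) < (1 - (1 - t)) * ln (Gamma x) + (1 - t) * ln (Gamma y)"
    using assms True by (intro lnGamma_strict) auto
  then show ?thesis by simp
next
  case False
  then have "y < x" using assms by simp
  have "ln (Gamma ((1 - t) * y + t * x)) < (1 - t) * ln (Gamma y) + t * ln (Gamma x)"
    using assms \<open>y < x\<close> by (intro lnGamma_strict) auto
  then show ?thesis by (simp add: algebra_simps)
qed

lemma Gamma_maj:
  fixes p s r :: real
  assumes "0 < p" "p \<le> s" "s \<le> r"
  shows "Gamma s * Gamma (p + r - s) \<le> Gamma p * Gamma r"
    and "p < s \<Longrightarrow> s < r \<Longrightarrow> Gamma s * Gamma (p + r - s) < Gamma p * Gamma r"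
proof -
  show strict: "Gamma s * Gamma (p + r - s) < Gamma p * Gamma r" if ps: "p < s" "s < r"
  proof -
    define l where "l = (s - p) / (r - p)"
    have l: "0 < l" "l < 1" using ps by (auto simp: l_def field_simps)
    have lr: "l * (r - p) = s - p" using ps by (simp add: l_def)
    have s_eq: "s = (1 - l) * p + l * r" using lr by (simp add: algebra_simps)
    have t_eq: "p + r - s = (1 - (1 - l)) * p + (1 - l) * r" using lr by (simp add: algebra_simps)
    have i1: "ln (Gamma s) < (1 - l) * ln (Gamma p) + l * ln (Gamma r)"
      unfolding s_eq using assms ps l by (intro lnGamma_strict) auto
    have i2: "ln (Gamma (p + r - s)) < (1 - (1 - l)) * ln (Gamma p) + (1 - l) * ln (Gamma r)"
      unfolding t_eq using assms ps l by (intro lnGamma_strict) auto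
    have pos: "Gamma s > 0" "Gamma (p + r - s) > 0" "Gamma p > 0" "Gamma r > 0"
      using assms ps by (auto intro!: Gamma_real_pos)
    have "ln (Gamma s * Gamma (p + r - s)) < ln (Gamma p * Gamma r)"
      using i1 i2 pos by (simp add: ln_mult algebra_simps)
    then show ?thesis using pos by simp
  qed
  show "Gamma s * Gamma (p + r - s) \<le> Gamma p * Gamma r"
  proof (cases "p < s \<and> s < r")
    case True then show ?thesis using strict by (simp add: less_imp_le)
  next
    case False
    then have "s = p \<or> s = r" using assms by auto
    then show ?thesis by (auto simp: mult.commute)
  qed
qed

lemma pair_ineq:
  fixes p q c d :: real
  assumes "0 < p" "0 < q" "0 < c" "0 < d"
  shows "Gamma (p + d) * Gamma (q + c) + Gamma (q + d) * Gamma (p + c)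
       < Gamma (p + c + d) * Gamma q + Gamma (q + c + d) * Gamma p"
proof -
  have main: "Gamma (p + d) * Gamma (q + c) + Gamma (q + d) * Gamma (p + c)
       < Gamma (p + c + d) * Gamma q + Gamma (q + c + d) * Gamma p"
    if "0 < p" "p \<le> q" for p q
  proof -
    define X1 where "X1 = Gamma (p + d) * Gamma (q + c)"
    define X2 where "X2 = Gamma (q + d) * Gamma (p + c)"
    define Y1 where "Y1 = Gamma (p + c + d) * Gamma q"
    define Y2 where "Y2 = Gamma (q + c + d) * Gamma p"
    have pos: "X1 > 0" "X2 > 0" "Y1 > 0" "Y2 > 0"
      using that assms by (auto simp: X1_def X2_def Y1_def Y2_def intro!: Gamma_real_pos)
    have h1: "X1 \<le> Y2"
      using Gamma_maj(1)[of p "p + d" "q + c + d"] that assms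
      by (simp add: X1_def Y2_def mult.commute algebra_simps)
    have h2: "X2 \<le> Y2"
      using Gamma_maj(1)[of p "p + c" "q + c + d"] that assms
      by (simp add: X2_def Y2_def algebra_simps)
    have h3: "Gamma (p + d) * Gamma (p + c) < Gamma p * Gamma (p + c + d)"
      using Gamma_maj(2)[of p "p + d" "p + c + d"] that assms
      by (simp add: algebra_simps)
    have h4: "Gamma (q + d) * Gamma (q + c) \<le> Gamma q * Gamma (q + c + d)"
      using Gamma_maj(1)[of q "q + d" "q + c + d"] that assms
      by (simp add: algebra_simps)
    have gp: "Gamma (p + d) > 0" "Gamma (p + c) > 0" "Gamma (q+d) > 0" "Gamma (q+c) > 0"
      using that assms by (auto intro!: Gamma_real_pos)
    have "X1 * X2 = (Gamma (p + d) * Gamma (p + c)) * (Gamma (q + d) * Gamma (q + c))"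
      by (simp add: X1_def X2_def algebra_simps)
    also have "\<dots> < (Gamma p * Gamma (p + c + d)) * (Gamma q * Gamma (q + c + d))"
      by (rule mult_less_le_imp_less[OF h3 h4]) (use gp in auto)
    also have "\<dots> = Y1 * Y2" by (simp add: Y1_def Y2_def algebra_simps)
    finally have x12: "X1 * X2 < Y1 * Y2" .
    have "(Y2 - X1) * (Y2 - X2) \<ge> 0" using h1 h2 by (intro mult_nonneg_nonneg) auto
    then have "Y2 * (X1 + X2) < Y2 * (Y1 + Y2)" using x12 by (simp add: algebra_simps)
    then have "X1 + X2 < Y1 + Y2" using pos by simp
    then show ?thesis by (simp add: X1_def X2_def Y1_def Y2_def)
  qed
  show ?thesis
  proof (cases "p \<le> q")
    case True then show ?thesis using main[of p q] assms by simp
  next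
    case False then show ?thesis using main[of q p] assms by simp
  qed
qed

lemma pair_spec:
  fixes a b d :: real and i j :: nat
  assumes "0 < a" "a < b" "0 < d"
  shows "Gamma (a + d + real i) * Gamma (b + real j) + Gamma (a + d + real j) * Gamma (b + real i)
       < Gamma (b + d + real i) * Gamma (a + real j) + Gamma (b + d + real j) * Gamma (a + real i)"
proof -
  have "Gamma ((a + real i) + d) * Gamma ((a + real j) + (b - a)) + Gamma ((a + real j) + d) * Gamma ((a + real i) + (b - a))
       < Gamma ((a + real i) + (b - a) + d) * Gamma (a + real j) + Gamma ((a + real j) + (b - a) + d) * Gamma (a + real i)"
    using assms by (intro pair_ineq) auto
  moreover have "(a + real i) + d = a + d + real i" "(a + real j) + d = a + d + real j"
    "(a + real j) + (b - a) = b + real j" "(a + real i) + (b - a) = b + real i"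
    "(a + real i) + (b - a) + d = b + d + real i" "(a + real j) + (b - a) + d = b + d + real j"
    by simp_all
  ultimately show ?thesis by (simp add: add_ac)
qed

lemma amgm:
  fixes u v t :: real
  assumes "0 < u" "0 < v" "0 < t" "t < 1"
  shows "u powr t * v powr (1 - t) \<le> t * u + (1 - t) * v"
proof -
  have "exp ((1 - t) * ln v + t * ln u) \<le> (1 - t) * exp (ln v) + t * exp (ln u)"
    using convex_onD[OF exp_convex, of t "ln v" "ln u"] assms by simp
  then have "exp (t * ln u + (1 - t) * ln v) \<le> t * exp (ln u) + (1 - t) * exp (ln v)"
    by (simp add: add.commute)
  then show ?thesis using assms by (simp add: powr_def exp_add)
qed

lemma part1:
  fixes g :: "nat \<Rightarrow> real" and a b \<delta> :: real
  assumes gpos: "\<And>n. g n > 0"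
    and ab: "0 < a" "a < b" and d: "0 < \<delta>"
  shows "fps_nth (gfps g (a + \<delta>) * gfps g b - gfps g (b + \<delta>) * gfps g a) m < 0"
proof -
  define T where "T = (\<lambda>i. g i * Gamma (a + \<delta> + real i) * (g (m - i) * Gamma (b + real (m - i)))
      - g i * Gamma (b + \<delta> + real i) * (g (m - i) * Gamma (a + real (m - i))))"
  have S: "fps_nth (gfps g (a + \<delta>) * gfps g b - gfps g (b + \<delta>) * gfps g a) m = (\<Sum>i=0..m. T i)"
    by (simp add: fps_mult_nth gfps_def T_def sum_subtractf add_ac)
  have rev: "(\<Sum>i=0..m. T i) = (\<Sum>i=0..m. T (m - i))"
    using sum.atLeastAtMost_rev[of T 0 m] by simp
  have neg: "T i + T (m - i) < 0" if "i \<in> {0..m}" for i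
  proof -
    define j where "j = m - i"
    have mj: "m - j = i" using that by (simp add: j_def)
    note key = pair_spec[OF ab d, of i j]
    have "T i + T (m - i) = g i * g j * ((Gamma (a + \<delta> + real i) * Gamma (b + real j) + Gamma (a + \<delta> + real j) * Gamma (b + real i))
       - (Gamma (b + \<delta> + real i) * Gamma (a + real j) + Gamma (b + \<delta> + real j) * Gamma (a + real i)))"
      unfolding T_def j_def[symmetric] mj by (simp add: algebra_simps)
    also have "\<dots> < 0"
      using key gpos[of i] gpos[of j] by (intro mult_pos_neg) auto
    finally show ?thesis .
  qed
  have "2 * (\<Sum>i=0..m. T i) = (\<Sum>i=0..m. T i + T (m - i))"
    using rev by (simp add: sum.distrib)
  also have "\<dots> < (\<Sum>i=0..m. 0)"
    by (rule sum_strict_mono) (use neg in auto)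
  finally show ?thesis using S by simp
qed

lemma part2:
  fixes g :: "nat \<Rightarrow> real" and x :: real
  assumes gpos: "\<And>n. g n > 0" and x: "x > 0"
    and summ: "\<And>c. c > 0 \<Longrightarrow> summable (\<lambda>n. g n * Gamma (c + real n) * x ^ n)"
  shows "strict_convex_on {0<..} (\<lambda>c. ln (\<Sum>n. g n * Gamma (c + real n) * x ^ n))"
  unfolding strict_convex_on_def
proof (intro ballI allI impI)
  fix u v t :: real
  assume uv: "u \<in> {0<..}" "v \<in> {0<..}" and h: "u \<noteq> v \<and> 0 < t \<and> t < 1"
  then have u: "u > 0" and v: "v > 0" and t: "0 < t" "t < 1" and ne: "u \<noteq> v" by auto
  define w where "w = t * u + (1 - t) * v"
  have w: "w > 0" using u v t unfolding w_def by (intro add_pos_nonneg) auto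
  define h where "h = (\<lambda>c n. g n * Gamma (c + real n) * x ^ n)"
  have hpos: "\<And>c n. c > 0 \<Longrightarrow> h c n > 0"
    unfolding h_def using gpos x by (auto intro!: mult_pos_pos Gamma_real_pos)
  define A where "A = (\<Sum>n. h u n)"
  define B where "B = (\<Sum>n. h v n)"
  have sh: "\<And>c. c > 0 \<Longrightarrow> summable (h c)" unfolding h_def by (rule summ)
  have A: "A > 0" unfolding A_def using sh[OF u] hpos[OF u] by (rule suminf_pos)
  have B: "B > 0" unfolding B_def using sh[OF v] hpos[OF v] by (rule suminf_pos)
  define K where "K = A powr t * B powr (1 - t)"
  have K: "K > 0" using A B by (simp add: K_def)
  have trm: "h w n < K * (t * (h u n / A) + (1 - t) * (h v n / B))" for n
  proof -
    define e where "e = g n * x ^ n"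
    have e: "e > 0" using gpos x by (simp add: e_def)
    have wn: "w + real n = t * (u + real n) + (1 - t) * (v + real n)"
      by (simp add: w_def algebra_simps)
    have "ln (Gamma (w + real n)) < t * ln (Gamma (u + real n)) + (1 - t) * ln (Gamma (v + real n))"
      unfolding wn using u v ne t by (intro lnGamma_strict') auto
    have gp: "Gamma (w + real n) > 0" "Gamma (u + real n) > 0" "Gamma (v + real n) > 0"
      using u v w by (auto intro!: Gamma_real_pos)
    have "Gamma (w + real n) = exp (ln (Gamma (w + real n)))" using gp by simp
    also have "\<dots> < exp (t * ln (Gamma (u + real n)) + (1 - t) * ln (Gamma (v + real n)))"
      using \<open>ln (Gamma (w + real n)) < _\<close> by simp
    also have "\<dots> = Gamma (u + real n) powr t * Gamma (v + real n) powr (1 - t)"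
      using gp by (simp add: powr_def exp_add mult.commute)
    finally have "Gamma (w + real n) < Gamma (u + real n) powr t * Gamma (v + real n) powr (1 - t)" .
    then have "e * Gamma (w + real n) < e * (Gamma (u + real n) powr t * Gamma (v + real n) powr (1 - t))"
      using e by simp
    also have "e * (Gamma (u + real n) powr t * Gamma (v + real n) powr (1 - t))
       = (e powr t * Gamma (u + real n) powr t) * (e powr (1 - t) * Gamma (v + real n) powr (1 - t))"
    proof -
      have A: "(e powr t * Gamma (u + real n) powr t) * (e powr (1 - t) * Gamma (v + real n) powr (1 - t))
          = (e powr t * e powr (1 - t)) * (Gamma (u + real n) powr t * Gamma (v + real n) powr (1 - t))"
        by (simp only: ac_simps)
      have B: "e powr t * e powr (1 - t) = e" using e by (simp add: powr_add[symmetric])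
      show ?thesis by (simp only: A B)
    qed
    finally have lt1: "e * Gamma (w + real n) < (e powr t * Gamma (u + real n) powr t) * (e powr (1 - t) * Gamma (v + real n) powr (1 - t))" .
    have hu: "h u n = e * Gamma (u + real n)" "h v n = e * Gamma (v + real n)" "h w n = e * Gamma (w + real n)"
      by (simp_all add: h_def e_def ac_simps)
    have "(h u n) powr t = e powr t * Gamma (u + real n) powr t"
      unfolding hu using e gp by (intro powr_mult; simp)
    moreover have "(h v n) powr (1 - t) = e powr (1 - t) * Gamma (v + real n) powr (1 - t)"
      unfolding hu using e gp by (intro powr_mult; simp)
    ultimately have "h w n < (h u n) powr t * (h v n) powr (1 - t)"
      using lt1 hu(3) by simp
    also have "(h u n) powr t * (h v n) powr (1 - t) = K * ((h u n / A) powr t * (h v n / B) powr (1 - t))"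
      using A B hpos[OF u] hpos[OF v] by (simp add: K_def powr_divide)
    also have "\<dots> \<le> K * (t * (h u n / A) + (1 - t) * (h v n / B))"
      using K A B hpos[OF u, of n] hpos[OF v, of n] t by (intro mult_left_mono amgm) auto
    finally show ?thesis .
  qed
  have s2: "summable (\<lambda>n. K * (t * (h u n / A) + (1 - t) * (h v n / B)))"
    using sh[OF u] sh[OF v]
    by (intro summable_mult summable_add summable_divide) auto
  have "(\<Sum>n. K * (t * (h u n / A) + (1 - t) * (h v n / B))) = K * (t * (A / A) + (1 - t) * (B / B))"
  proof -
    have "(\<Sum>n. K * (t * (h u n / A) + (1 - t) * (h v n / B))) = K * (\<Sum>n. (t * (h u n / A) + (1 - t) * (h v n / B)))"
      using sh[OF u] sh[OF v] by (intro suminf_mult summable_mult summable_add summable_divide) auto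
    also have "(\<Sum>n. (t * (h u n / A) + (1 - t) * (h v n / B))) = (\<Sum>n. t * (h u n / A)) + (\<Sum>n. (1 - t) * (h v n / B))"
      using sh[OF u] sh[OF v] by (intro suminf_add[symmetric] summable_mult summable_divide) auto
    also have "(\<Sum>n. t * (h u n / A)) = t * (A / A)"
      using sh[OF u] unfolding A_def by (simp add: suminf_mult suminf_divide summable_divide)
    also have "(\<Sum>n. (1 - t) * (h v n / B)) = (1 - t) * (B / B)"
      using sh[OF v] unfolding B_def by (simp add: suminf_mult suminf_divide summable_divide)
    finally show ?thesis .
  qed
  also have "\<dots> = K" using A B by simp
  finally have sK: "(\<Sum>n. K * (t * (h u n / A) + (1 - t) * (h v n / B))) = K" .
  have "0 < (\<Sum>n. K * (t * (h u n / A) + (1 - t) * (h v n / B)) - h w n)"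
    using trm by (intro suminf_pos summable_diff s2 sh[OF w]) auto
  also have "\<dots> = K - (\<Sum>n. h w n)"
    using suminf_diff[OF s2 sh[OF w]] sK by simp
  finally have lt: "(\<Sum>n. h w n) < K" by simp
  have pw: "(\<Sum>n. h w n) > 0" using sh[OF w] hpos[OF w] by (rule suminf_pos)
  have "ln (\<Sum>n. h w n) < ln K" using lt pw by simp
  also have "ln K = t * ln A + (1 - t) * ln B" using A B by (simp add: K_def ln_mult ln_powr)
  finally show "ln (\<Sum>n. g n * Gamma ((t * u + (1 - t) * v) + real n) * x ^ n)
      < t * ln (\<Sum>n. g n * Gamma (u + real n) * x ^ n) + (1 - t) * ln (\<Sum>n. g n * Gamma (v + real n) * x ^ n)"
    by (simp add: h_def A_def B_def w_def)
qed

theorem theorem2: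
  fixes g :: "nat \<Rightarrow> real" and a b \<delta> :: real
  assumes gpos: "\<And>n. g n > 0"
    and ab: "0 < a" "a < b" and d: "0 < \<delta>"
  shows "(\<forall>m. fps_nth (gfps g (a + \<delta>) * gfps g b - gfps g (b + \<delta>) * gfps g a) m < 0)
       \<and> (\<forall>x::real. x > 0 \<and> (\<forall>c>0. summable (\<lambda>n. g n * Gamma (c + real n) * x ^ n)) \<longrightarrow>
            strict_convex_on {0<..} (\<lambda>c. ln (\<Sum>n. g n * Gamma (c + real n) * x ^ n)))"
proof (intro conjI allI impI)
  fix m show "fps_nth (gfps g (a + \<delta>) * gfps g b - gfps g (b + \<delta>) * gfps g a) m < 0"
    by (rule part1[OF gpos ab d])
next
  fix x :: real
  assume "x > 0 \<and> (\<forall>c>0. summable (\<lambda>n. g n * Gamma (c + real n) * x ^ n))"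
  then show "strict_convex_on {0<..} (\<lambda>c. ln (\<Sum>n. g n * Gamma (c + real n) * x ^ n))"
    by (intro part2[of g x] gpos) auto
qed

end
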